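(* Let $\lambda$ be an infinite cardinal. For every coloring $c:[\lambda^+]^2\to\lambda$ there exists a coloring $c^+:[\lambda^+]^2\to\lambda^+$ such that for every cardinal $\mu\le\lambda$ and every partition $p:[\lambda^+]^2\to\mu$: (1) if $c$ witnesses $\lambda^+\nrightarrow_p[\lambda^+]^2_\lambda$ then $c^+$ witnesses $\lambda^+\nrightarrow_p[\lambda^+]^2_{\lambda^+}$; (2) for every cardinal $\varkappa$, if $c$ witnesses $\lambda^+\nrightarrow_p[\varkappa\circledast\lambda^+]^2_\lambda$ then $c^+$ witnesses $\lambda^+\nrightarrow_p[\varkappa\circledast\lambda^+]^2_{\lambda^+}$.
   Context: $[\kappa]^2$ denotes the set of pairs $(\alpha,\beta)$ with $\alpha<\beta<\kappa$; a partition is any function $p:[\kappa]^2\to\mu$. Given $p:[\kappa]^2\to\mu$, a coloring $c:[\kappa]^2\to\theta$ witnesses $\kappa\nrightarrow_p[\kappa]^2_\theta$ iff for every $A\subseteq\kappa$ with $|A|=\kappa$ and every $\tau:\mu\to\theta$ there are $\alpha<\beta$ in $A$ with $c(\alpha,\beta)=\tau(p(\alpha,\beta))$. It witnesses $\kappa\nrightarrow_p[\varkappa\circledast\kappa]^2_\theta$ iff for every $A\subseteq\kappa$ with $|A|=\varkappa$, every $B\subseteq\kappa$ with $|B|=\kappa$, and every $\tau:\mu\to\theta$ there are $\alpha\in A$ and $\beta\in B$ with $\alpha<\beta$ and $c(\alpha,\beta)=\tau(p(\alpha,\beta))$. *)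

theory Defs
  imports Main "HOL-Library.FuncSet"
begin

text \<open>An ordinal kappa is modelled by a carrier set K together with a well-order r on K
  (Field r = K); alpha < beta means (alpha, beta) in r and alpha different from beta.\<close>

definition strict_less :: "'a rel \<Rightarrow> 'a \<Rightarrow> 'a \<Rightarrow> bool" where
  "strict_less r \<alpha> \<beta> \<longleftrightarrow> (\<alpha>, \<beta>) \<in> r \<and> \<alpha> \<noteq> \<beta>"

definition coloring_on :: "'a set \<Rightarrow> 'a rel \<Rightarrow> ('a \<Rightarrow> 'a \<Rightarrow> 'c) \<Rightarrow> 'c set \<Rightarrow> bool" where
  "coloring_on K r c \<Theta> \<longleftrightarrow>
     (\<forall>\<alpha>\<in>K. \<forall>\<beta>\<in>K. strict_less r \<alpha> \<beta> \<longrightarrow> c \<alpha> \<beta> \<in> \<Theta>)"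

text \<open>c witnesses kappa -/->_p [kappa]^2_theta, where p : [kappa]^2 -> M (|M| = mu)
  and c : [kappa]^2 -> Theta (|Theta| = theta).\<close>
definition witnesses_sq ::
  "'a set \<Rightarrow> 'a rel \<Rightarrow> ('a \<Rightarrow> 'a \<Rightarrow> 'm) \<Rightarrow> 'm set \<Rightarrow> ('a \<Rightarrow> 'a \<Rightarrow> 'c) \<Rightarrow> 'c set \<Rightarrow> bool" where
  "witnesses_sq K r p M c \<Theta> \<longleftrightarrow>
     (\<forall>A. A \<subseteq> K \<longrightarrow> (card_of A, card_of K) \<in> ordIso \<longrightarrow>
        (\<forall>\<tau> \<in> M \<rightarrow> \<Theta>. \<exists>\<alpha>\<in>A. \<exists>\<beta>\<in>A. strict_less r \<alpha> \<beta> \<and> c \<alpha> \<beta> = \<tau> (p \<alpha> \<beta>)))"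

text \<open>c witnesses kappa -/->_p [varkappa (*) kappa]^2_theta, where |X| = varkappa.\<close>
definition witnesses_circ ::
  "'a set \<Rightarrow> 'a rel \<Rightarrow> ('a \<Rightarrow> 'a \<Rightarrow> 'm) \<Rightarrow> 'm set \<Rightarrow> ('a \<Rightarrow> 'a \<Rightarrow> 'c) \<Rightarrow> 'c set \<Rightarrow> 'x set \<Rightarrow> bool" where
  "witnesses_circ K r p M c \<Theta> X \<longleftrightarrow>
     (\<forall>A B. A \<subseteq> K \<longrightarrow> B \<subseteq> K \<longrightarrow> (card_of A, card_of X) \<in> ordIso \<longrightarrow>
        (card_of B, card_of K) \<in> ordIso \<longrightarrow>
        (\<forall>\<tau> \<in> M \<rightarrow> \<Theta>. \<exists>\<alpha>\<in>A. \<exists>\<beta>\<in>B. strict_less r \<alpha> \<beta> \<and> c \<alpha> \<beta> = \<tau> (p \<alpha> \<beta>)))"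

end

theory Submission
  imports Defs
begin
unbundle cardinal_syntax

lemma basics:
  fixes L :: "'l set" and K :: "'a set" and r :: "'a rel"
  assumes inf: "infinite L" and co: "card_order_on K r" and iso: "r =o cardSuc (card_of L)"
  shows "K = Field r" "Card_order r" "Cinfinite r" "regularCard r"
    "\<And>S. |S| <o r \<longleftrightarrow> |S| \<le>o |L|" "|K| =o r"
proof -
  have cc: "K = Field r \<and> Card_order r" using card_order_on_Card_order[OF co] .
  show F: "K = Field r" using cc by (rule conjunct1)
  show C: "Card_order r" using cc by (rule conjunct2)
  have CL: "Cinfinite |L|" using inf by (simp add: cinfinite_def card_of_card_order_on Field_card_of)
  have CS: "Cinfinite (cardSuc (card_of L))" using Cinfinite_cardSuc[OF CL] .
  have LF: "\<not> finite (Field (card_of L))" using inf by (simp add: Field_card_of)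
  have RS: "regularCard (cardSuc (card_of L))"
    using infinite_cardSuc_regularCard[OF LF card_of_Card_order] .
  have iso': "cardSuc (card_of L) =o r" using ordIso_symmetric[OF iso] .
  show "regularCard r" using regularCard_ordIso[OF iso' CS RS] .
  show "Cinfinite r" using Cinfinite_cong[OF iso' CS] .
  show "|K| =o r" using card_of_Field_ordIso[OF C] F by simp
  fix S :: "'b set"
  have e1: "|S| <o r \<Longrightarrow> |S| <o cardSuc (card_of L)" using ordLess_ordIso_trans[OF _ iso] .
  have e2: "|S| <o cardSuc (card_of L) \<Longrightarrow> |S| <o r" using ordLess_ordIso_trans[OF _ iso'] .
  have e3: "(card_of S <o cardSuc (card_of L)) = (card_of S \<le>o card_of L)"
    using cardSuc_ordLeq_ordLess[OF card_of_Card_order card_of_Card_order] .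
  show "|S| <o r \<longleftrightarrow> |S| \<le>o |L|" using e1 e2 e3 by blast
qed

lemma wo_facts:
  assumes co: "card_order_on K r"
  shows "\<And>x. x \<in> K \<Longrightarrow> (x,x) \<in> r"
    "\<And>x y z. (x,y) \<in> r \<Longrightarrow> (y,z) \<in> r \<Longrightarrow> (x,z) \<in> r"
    "\<And>x y. x \<in> K \<Longrightarrow> y \<in> K \<Longrightarrow> (x,y) \<in> r \<or> (y,x) \<in> r"
proof -
  have wo: "well_order_on K r" using co unfolding card_order_on_def by (rule conjunct1)
  hence lin: "linear_order_on K r" unfolding well_order_on_def by (rule conjunct1)
  hence po: "partial_order_on K r" and tot: "total_on K r" unfolding linear_order_on_def by simp_all
  hence pre: "preorder_on K r" unfolding partial_order_on_def by simp
  hence rf: "refl_on K r" and tr: "trans r" unfolding preorder_on_def by simp_all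
  show "\<And>x. x \<in> K \<Longrightarrow> (x,x) \<in> r" using rf unfolding refl_on_def by blast
  show "\<And>x y z. (x,y) \<in> r \<Longrightarrow> (y,z) \<in> r \<Longrightarrow> (x,z) \<in> r" using tr by (rule transD)
  show "\<And>x y. x \<in> K \<Longrightarrow> y \<in> K \<Longrightarrow> (x,y) \<in> r \<or> (y,x) \<in> r"
  proof -
    fix x y assume x: "x \<in> K" and y: "y \<in> K"
    show "(x,y) \<in> r \<or> (y,x) \<in> r"
    proof (cases "x = y")
      case True thus ?thesis using rf x unfolding refl_on_def by blast
    next
      case False thus ?thesis using tot x y unfolding total_on_def by blast
    qed
  qed
qed

theorem proposition3p2:
  fixes L :: "'l set" and K :: "'a set" and r :: "'a rel" and c :: "'a \<Rightarrow> 'a \<Rightarrow> 'l"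
  assumes "infinite L"
    and "card_order_on K r"
    and "(r, cardSuc (card_of L)) \<in> ordIso"
    and "coloring_on K r c L"
  shows "\<exists>cplus :: 'a \<Rightarrow> 'a \<Rightarrow> 'a. coloring_on K r cplus K \<and>
    (\<forall>(M :: 'l set) (p :: 'a \<Rightarrow> 'a \<Rightarrow> 'l).
       (card_of M, card_of L) \<in> ordLeq \<longrightarrow> coloring_on K r p M \<longrightarrow>
       (witnesses_sq K r p M c L \<longrightarrow> witnesses_sq K r p M cplus K) \<and>
       (\<forall>X :: 'a set. witnesses_circ K r p M c L X \<longrightarrow> witnesses_circ K r p M cplus K X))"
proof -
  note B = basics[OF assms(1-3)]
  note W = wo_facts[OF assms(2)]
  have infF: "infinite (Field r)" using B(3) by (simp add: cinfinite_def)
  have "L \<noteq> {}" using assms(1) by auto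
  then obtain l0 where l0: "l0 \<in> L" by blast
  have underL: "|under r \<beta>| \<le>o |L|" if "\<beta> \<in> K" for \<beta>
  proof -
    have bF: "\<beta> \<in> Field r" using that B(1) by simp
    have u1: "|underS r \<beta>| <o r" using card_of_underS[OF B(2) bF] .
    have "\<exists>f. inj_on f {\<beta>} \<and> f ` {\<beta>} \<subseteq> L"
      by (rule exI[of _ "\<lambda>_. l0"]) (use l0 in auto)
    hence "|{\<beta>}| \<le>o |L|" using card_of_ordLeq[of "{\<beta>}" L] by simp
    hence u2: "|{\<beta>}| <o r" using B(5)[of "{\<beta>}"] by simp
    have u3: "|underS r \<beta> \<union> {\<beta>}| <o r"
      using card_of_Un_ordLess_infinite_Field[OF infF B(2) u1 u2] .
    have "under r \<beta> \<subseteq> underS r \<beta> \<union> {\<beta>}" unfolding under_def underS_def by auto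
    hence "|under r \<beta>| <o r" using ordLeq_ordLess_trans[OF card_of_mono1 u3] by blast
    thus ?thesis using B(5)[of "under r \<beta>"] by simp
  qed
  define e where "e = (\<lambda>\<beta>. SOME f :: 'a \<Rightarrow> 'l. inj_on f (under r \<beta>) \<and> f ` under r \<beta> \<subseteq> L)"
  have e: "inj_on (e \<beta>) (under r \<beta>) \<and> e \<beta> ` under r \<beta> \<subseteq> L" if "\<beta> \<in> K" for \<beta>
  proof -
    have "\<exists>f :: 'a \<Rightarrow> 'l. inj_on f (under r \<beta>) \<and> f ` under r \<beta> \<subseteq> L"
      using underL[OF that] card_of_ordLeq[of "under r \<beta>" L] by simp
    thus ?thesis unfolding e_def by (rule someI_ex)
  qed
  have "|L \<times> L| =o |L|" using card_of_Times_same_infinite[OF assms(1)] .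
  hence "\<exists>h. bij_betw h (L \<times> L) L" using card_of_ordIso[of "L \<times> L" L] by simp
  then obtain h where h: "bij_betw h (L \<times> L) L" by blast
  define cplus where "cplus = (\<lambda>\<alpha> \<beta>. (case inv_into (L \<times> L) h (c \<alpha> \<beta>) of (k, j) \<Rightarrow>
      (let \<delta> = inv_into (under r \<beta>) (e \<beta>) k; \<eta> = inv_into (under r \<delta>) (e \<delta>) j in
       if \<eta> \<in> K then \<eta> else \<alpha>)))"
  have col: "coloring_on K r cplus K"
    unfolding coloring_on_def cplus_def by (auto simp: Let_def split: prod.split)
  have core: "\<exists>\<sigma> \<in> M \<rightarrow> L. \<exists>B' \<subseteq> A. |B'| =o |K| \<and>
     (\<forall>\<alpha> \<beta>. \<beta> \<in> B' \<longrightarrow> p \<alpha> \<beta> \<in> M \<longrightarrow> c \<alpha> \<beta> = \<sigma> (p \<alpha> \<beta>) \<longrightarrow> cplus \<alpha> \<beta> = \<tau> (p \<alpha> \<beta>))"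
    if M: "|M| \<le>o |L|" and A: "A \<subseteq> K" "|A| =o |K|" and \<tau>: "\<tau> \<in> M \<rightarrow> K"
    for M :: "'l set" and p :: "'a \<Rightarrow> 'a \<Rightarrow> 'l" and A \<tau>
  proof -
    have "|\<tau> ` M| \<le>o |M|" by (rule card_of_image)
    hence "|\<tau> ` M| \<le>o |L|" using ordLeq_transitive M by blast
    hence "|\<tau> ` M| <o r" using B(5)[of "\<tau> ` M"] by blast
    moreover have "relChain r (under r)" unfolding relChain_def under_def using W(2) by blast
    moreover have "\<tau> ` M \<subseteq> (\<Union>i \<in> Field r. under r i)"
      using \<tau> W(1) B(1) unfolding under_def by blast
    ultimately obtain \<delta> where \<delta>: "\<delta> \<in> Field r" "\<tau> ` M \<subseteq> under r \<delta>"
      using regularCard_UNION[OF B(2) B(4), of "under r" "\<tau> ` M"] by blast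
    hence \<delta>: "\<delta> \<in> K" "\<tau> ` M \<subseteq> under r \<delta>" using B(1) by auto
    define F where "F = (\<lambda>k. {\<beta> \<in> A. (\<delta>, \<beta>) \<in> r \<and> e \<beta> \<delta> = k})"
    have "\<exists>k \<in> L. \<not> |F k| <o r"
    proof (rule ccontr)
      assume "\<not> ?thesis"
      hence "\<And>k. k \<in> L \<Longrightarrow> |F k| <o r" by blast
      moreover have "|L| <o r" using B(5)[of L] ordLeq_refl[OF card_of_Card_order] by blast
      ultimately have "|\<Union>k\<in>L. F k| <o r"
        using regularCard_UNION_bound[OF B(3) B(4), of L F] by blast
      moreover have "|under r \<delta>| <o r" using B(5)[of "under r \<delta>"] underL[OF \<delta>(1)] by blast
      ultimately have "|under r \<delta> \<union> (\<Union>k\<in>L. F k)| <o r"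
        using card_of_Un_ordLess_infinite_Field[OF infF B(2)] by blast
      moreover have "A \<subseteq> under r \<delta> \<union> (\<Union>k\<in>L. F k)"
      proof
        fix \<beta> assume b: "\<beta> \<in> A"
        show "\<beta> \<in> under r \<delta> \<union> (\<Union>k\<in>L. F k)"
        proof (cases "(\<delta>, \<beta>) \<in> r")
          case True
          hence "\<delta> \<in> under r \<beta>" unfolding under_def by auto
          hence "e \<beta> \<delta> \<in> L" using e[of \<beta>] b A(1) by blast
          thus ?thesis using True b unfolding F_def by blast
        next
          case False
          thus ?thesis using W(3)[of \<delta> \<beta>] \<delta>(1) b A(1) unfolding under_def by blast
        qed
      qed
      ultimately have "|A| <o r" using card_of_mono1 ordLeq_ordLess_trans by blast
      moreover have "|A| =o r" using A(2) B(6) ordIso_transitive by blast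
      ultimately show False using not_ordLess_ordIso by blast
    qed
    then obtain k where k: "k \<in> L" "\<not> |F k| <o r" by blast
    have "|F k| \<le>o |K|" using A(1) unfolding F_def by (intro card_of_mono1) blast
    hence "|F k| \<le>o r" using B(6) ordLeq_ordIso_trans by blast
    hence "|F k| =o r" using k(2) ordLeq_iff_ordLess_or_ordIso by blast
    hence FK: "|F k| =o |K|" using B(6) ordIso_symmetric ordIso_transitive by blast
    define \<sigma> where "\<sigma> = (\<lambda>m. h (k, e \<delta> (\<tau> m)))"
    have eL: "e \<delta> (\<tau> m) \<in> L" if "m \<in> M" for m using e[OF \<delta>(1)] \<delta>(2) that by blast
    have \<sigma>: "\<sigma> \<in> M \<rightarrow> L" unfolding \<sigma>_def using h eL k(1) by (auto simp: bij_betw_def)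
    show ?thesis
    proof (intro bexI[OF _ \<sigma>] exI[of _ "F k"] conjI allI impI)
      show "F k \<subseteq> A" unfolding F_def by blast
      show "|F k| =o |K|" by (rule FK)
      fix \<alpha> \<beta> assume b: "\<beta> \<in> F k" and m: "p \<alpha> \<beta> \<in> M" and cv: "c \<alpha> \<beta> = \<sigma> (p \<alpha> \<beta>)"
      define m' where "m' = p \<alpha> \<beta>"
      have bK: "\<beta> \<in> K" and db: "(\<delta>, \<beta>) \<in> r" and ek: "e \<beta> \<delta> = k"
        using b A(1) unfolding F_def by auto
      have du: "\<delta> \<in> under r \<beta>" using db unfolding under_def by auto
      have tu: "\<tau> m' \<in> under r \<delta>" using \<delta>(2) m unfolding m'_def by blast
      have "inv_into (L \<times> L) h (c \<alpha> \<beta>) = (k, e \<delta> (\<tau> m'))"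
        using cv h k(1) eL[OF m[folded m'_def]] unfolding \<sigma>_def m'_def[symmetric]
        by (simp add: bij_betw_def inv_into_f_f)
      moreover have "inv_into (under r \<beta>) (e \<beta>) k = \<delta>"
        using e[OF bK] du ek inv_into_f_f by metis
      moreover have "inv_into (under r \<delta>) (e \<delta>) (e \<delta> (\<tau> m')) = \<tau> m'"
        using e[OF \<delta>(1)] tu inv_into_f_f by metis
      moreover have "\<tau> m' \<in> K" using \<tau> m unfolding m'_def by blast
      ultimately show "cplus \<alpha> \<beta> = \<tau> (p \<alpha> \<beta>)" unfolding cplus_def m'_def by simp
    qed
  qed
  show ?thesis
  proof (intro exI[of _ cplus] conjI col allI impI)
    fix M :: "'l set" and p :: "'a \<Rightarrow> 'a \<Rightarrow> 'l" and X :: "'a set"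
    assume M: "|M| \<le>o |L|" and pc: "coloring_on K r p M"
    have pM: "\<And>\<alpha> \<beta>. \<alpha> \<in> K \<Longrightarrow> \<beta> \<in> K \<Longrightarrow> strict_less r \<alpha> \<beta> \<Longrightarrow> p \<alpha> \<beta> \<in> M"
      using pc unfolding coloring_on_def by blast
    {
      assume hyp: "witnesses_sq K r p M c L"
      show "witnesses_sq K r p M cplus K"
        unfolding witnesses_sq_def
      proof (intro allI impI ballI)
        fix A \<tau> assume A: "A \<subseteq> K" "|A| =o |K|" and \<tau>: "\<tau> \<in> M \<rightarrow> K"
        obtain \<sigma> B' where \<sigma>: "\<sigma> \<in> M \<rightarrow> L" and B': "B' \<subseteq> A" "|B'| =o |K|"
          and dec: "\<And>\<alpha> \<beta>. \<beta> \<in> B' \<Longrightarrow> p \<alpha> \<beta> \<in> M \<Longrightarrow> c \<alpha> \<beta> = \<sigma> (p \<alpha> \<beta>) \<Longrightarrow> cplus \<alpha> \<beta> = \<tau> (p \<alpha> \<beta>)"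
          using core[OF M A \<tau>] by blast
        obtain \<alpha> \<beta> where ab: "\<alpha> \<in> B'" "\<beta> \<in> B'" "strict_less r \<alpha> \<beta>" "c \<alpha> \<beta> = \<sigma> (p \<alpha> \<beta>)"
          using hyp[unfolded witnesses_sq_def, rule_format, OF _ B'(2) \<sigma>] B'(1) A(1) by blast
        have "p \<alpha> \<beta> \<in> M" using pM ab A(1) B'(1) by blast
        thus "\<exists>\<alpha>\<in>A. \<exists>\<beta>\<in>A. strict_less r \<alpha> \<beta> \<and> cplus \<alpha> \<beta> = \<tau> (p \<alpha> \<beta>)"
          using dec ab B'(1) by blast
      qed
    }
    {
      assume hyp: "witnesses_circ K r p M c L X"
      show "witnesses_circ K r p M cplus K X"
        unfolding witnesses_circ_def
      proof (intro allI impI ballI)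
        fix A Bs \<tau> assume A: "A \<subseteq> K" and Bs: "Bs \<subseteq> K" and AX: "|A| =o |X|" and BK: "|Bs| =o |K|"
          and \<tau>: "\<tau> \<in> M \<rightarrow> K"
        obtain \<sigma> B' where \<sigma>: "\<sigma> \<in> M \<rightarrow> L" and B': "B' \<subseteq> Bs" "|B'| =o |K|"
          and dec: "\<And>\<alpha> \<beta>. \<beta> \<in> B' \<Longrightarrow> p \<alpha> \<beta> \<in> M \<Longrightarrow> c \<alpha> \<beta> = \<sigma> (p \<alpha> \<beta>) \<Longrightarrow> cplus \<alpha> \<beta> = \<tau> (p \<alpha> \<beta>)"
          using core[OF M Bs BK \<tau>] by blast
        have "B' \<subseteq> K" using B' Bs by blast
        then obtain \<alpha> \<beta> where ab: "\<alpha> \<in> A" "\<beta> \<in> B'" "strict_less r \<alpha> \<beta>" "c \<alpha> \<beta> = \<sigma> (p \<alpha> \<beta>)"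
          using hyp[unfolded witnesses_circ_def, rule_format, OF A \<open>B' \<subseteq> K\<close> AX B'(2) \<sigma>] by blast
        have "p \<alpha> \<beta> \<in> M" using pM ab A Bs B'(1) by blast
        thus "\<exists>\<alpha>\<in>A. \<exists>\<beta>\<in>Bs. strict_less r \<alpha> \<beta> \<and> cplus \<alpha> \<beta> = \<tau> (p \<alpha> \<beta>)"
          using dec ab B'(1) by blast
      qed
    }
  qed
qed

end
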